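(* Let $(J,S)$ be a homogeneous $d$-dimensional multi-time Markov renewal chain with semi-Markov kernel $q$, let $u=\sum_{n\ge0}q^{(n)}=(\mathbbm{I}_s-q)^{(-1)}$, and let $Z$ be the associated multi-time semi-Markov chain with transition function $P$. Then $P=u*\widetilde{H}$.
   Context: $E=\{1,\dots,s\}$; $\mathcal{M}_s(\mathbb{N}^d)$ is the set of functions $\mathbb{N}^d\to\mathbb{R}^{s\times s}$, with convolution $[A*B](k)=\sum_{l+l'=k}A(l)B(l')$, identity $\mathbbm{I}_s$, powers $A^{(n)}$ and convolutional inverse $A^{(-1)}$. $\mathbb{N}^d$ carries the partial order $k\le l$ iff $k_u\le l_u$ for all $u$ ($k<l$: $k\le l$, $k\neq l$). A homogeneous $d$-dimensional multi-time Markov renewal chain is a process $(J_n,S_n)_{n\in\mathbb{N}}$, $J_n\in E$, $S_n\in\mathbb{N}^d$, $S_0=0_d$, $S_n<S_{n+1}$, with a.s. $\mathbb{P}(J_{n+1}=j,S_{n+1}-S_n=k\mid J_{0:n},S_{0:n})=q_{J_nj}(k)$, $q_{ij}(k)=\mathbb{P}(J_{n+1}=j,S_{n+1}-S_n=k\mid J_n=i)$ independent of $n$. $X_{n+1}=S_{n+1}-S_n$. $N(k)=\sup\{n\in\mathbb{N}:S_n\le k\}$; the associated multi-time semi-Markov chain is $Z_k=J_{N(k)}$, $k\in\mathbb{N}^d$, and its transition function is $P_{ij}(k)=\mathbb{P}(Z_k=j\mid Z_{0_d}=i)$. With $H_i(k)=\mathbb{P}(X_{n+1}\le k\mid J_n=i)$,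 $\widetilde{H}\in\mathcal{M}_s(\mathbb{N}^d)$ is the diagonal matrix sequence $\widetilde{H}(k)=\mathrm{diag}(1-H_1(k),\dots,1-H_s(k))$. *)

theory Defs
  imports "HOL-Probability.Probability"
begin

(* N^d is represented as 'd \<Rightarrow> nat with 'd a finite index type (d = CARD('d));
   the order is the pointwise order of functions (k \<le> l iff k u \<le> l u for all u),
   subtraction is pointwise.
   A matrix sequence in M_s(N^d) is a function ('d \<Rightarrow> nat) \<Rightarrow> nat \<Rightarrow> nat \<Rightarrow> real,
   A k i j being the (i,j) entry of A(k), i,j \<in> {1..s}. *)

type_synonym 'd mseq = "('d \<Rightarrow> nat) \<Rightarrow> nat \<Rightarrow> nat \<Rightarrow> real"

definition conv :: "nat \<Rightarrow> ('d::finite) mseq \<Rightarrow> 'd mseq \<Rightarrow> 'd mseq" where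
  "conv s A B k i j = (\<Sum>l\<in>{l. l \<le> k}. \<Sum>r\<in>{1..s}. A l i r * B (k - l) r j)"

definition idseq :: "('d::finite) mseq" where
  "idseq k i j = (if k = (\<lambda>_. 0) \<and> i = j then 1 else 0)"

primrec convpow :: "nat \<Rightarrow> ('d::finite) mseq \<Rightarrow> nat \<Rightarrow> 'd mseq" where
  "convpow s A 0 = idseq"
| "convpow s A (Suc n) = conv s (convpow s A n) A"

definition useq :: "nat \<Rightarrow> ('d::finite) mseq \<Rightarrow> 'd mseq" where
  "useq s q k i j = (\<Sum>n. convpow s q n k i j)"

(* H_i(k) = P(X_{n+1} \<le> k | J_n = i) = \<Sum>_j \<Sum>_{l \<le> k} q_ij(l) *)
definition Hdist :: "nat \<Rightarrow> ('d::finite) mseq \<Rightarrow> nat \<Rightarrow> ('d \<Rightarrow> nat) \<Rightarrow> real" where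
  "Hdist s q i k = (\<Sum>j\<in>{1..s}. \<Sum>l\<in>{l. l \<le> k}. q l i j)"

definition Htilde :: "nat \<Rightarrow> ('d::finite) mseq \<Rightarrow> 'd mseq" where
  "Htilde s q k i j = (if i = j then 1 - Hdist s q i k else 0)"

(* The a.s. conditional-probability
   condition is stated in its elementary (discrete) form: for every history. *)
definition multi_time_MRC ::
  "'w measure \<Rightarrow> nat \<Rightarrow> ('d::finite) mseq \<Rightarrow> (nat \<Rightarrow> 'w \<Rightarrow> nat) \<Rightarrow> (nat \<Rightarrow> 'w \<Rightarrow> ('d \<Rightarrow> nat)) \<Rightarrow> bool"
where
  "multi_time_MRC M s q J S \<longleftrightarrow>
     prob_space M \<and> 1 \<le> s \<and>
     (\<forall>n. J n \<in> measurable M (count_space UNIV)) \<and>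
     (\<forall>n. S n \<in> measurable M (count_space UNIV)) \<and>
     (\<forall>n. \<forall>\<omega>\<in>space M. J n \<omega> \<in> {1..s}) \<and>
     (\<forall>\<omega>\<in>space M. S 0 \<omega> = (\<lambda>_. 0)) \<and>
     (\<forall>n. \<forall>\<omega>\<in>space M. S n \<omega> < S (Suc n) \<omega>) \<and>
     (\<forall>n (js :: nat \<Rightarrow> nat) (ss :: nat \<Rightarrow> ('d \<Rightarrow> nat)) j k.
        measure M {\<omega>\<in>space M. J (Suc n) \<omega> = j \<and> S (Suc n) \<omega> - S n \<omega> = k \<and>
                         (\<forall>m\<le>n. J m \<omega> = js m \<and> S m \<omega> = ss m)}
        = q k (js n) j * measure M {\<omega>\<in>space M. \<forall>m\<le>n. J m \<omega> = js m \<and> S m \<omega> = ss m})"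

definition Ncount :: "(nat \<Rightarrow> 'w \<Rightarrow> ('d::finite \<Rightarrow> nat)) \<Rightarrow> ('d \<Rightarrow> nat) \<Rightarrow> 'w \<Rightarrow> nat" where
  "Ncount S k \<omega> = Sup {n. S n \<omega> \<le> k}"

definition Zsm :: "(nat \<Rightarrow> 'w \<Rightarrow> nat) \<Rightarrow> (nat \<Rightarrow> 'w \<Rightarrow> ('d::finite \<Rightarrow> nat)) \<Rightarrow> ('d \<Rightarrow> nat) \<Rightarrow> 'w \<Rightarrow> nat" where
  "Zsm J S k \<omega> = J (Ncount S k \<omega>) \<omega>"

definition smc_transition ::
  "'w measure \<Rightarrow> (nat \<Rightarrow> 'w \<Rightarrow> nat) \<Rightarrow> (nat \<Rightarrow> 'w \<Rightarrow> ('d::finite \<Rightarrow> nat)) \<Rightarrow> 'd mseq" where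
  "smc_transition M J S k i j =
     measure M {\<omega>\<in>space M. Zsm J S k \<omega> = j \<and> Zsm J S (\<lambda>_. 0) \<omega> = i}
     / measure M {\<omega>\<in>space M. Zsm J S (\<lambda>_. 0) \<omega> = i}"

end

theory Submission
  imports Defs
begin
locale mrc = prob_space M for M :: "'w measure" +
  fixes s :: nat and q :: "('d::finite) mseq" and J :: "nat \<Rightarrow> 'w \<Rightarrow> nat" and S :: "nat \<Rightarrow> 'w \<Rightarrow> ('d \<Rightarrow> nat)"
  assumes J_meas[measurable]: "\<And>n. J n \<in> measurable M (count_space UNIV)"
  and S_meas[measurable]: "\<And>n. S n \<in> measurable M (count_space UNIV)"
  and J_range: "\<And>n \<omega>. \<omega> \<in> space M \<Longrightarrow> J n \<omega> \<in> {1..s}"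
  and S0: "\<And>\<omega>. \<omega> \<in> space M \<Longrightarrow> S 0 \<omega> = (\<lambda>_. 0)"
  and S_inc: "\<And>n \<omega>. \<omega> \<in> space M \<Longrightarrow> S n \<omega> < S (Suc n) \<omega>"
  and markov: "\<And>n js ss j k.
        measure M {\<omega>\<in>space M. J (Suc n) \<omega> = j \<and> S (Suc n) \<omega> - S n \<omega> = k \<and>
                         (\<forall>m\<le>n. J m \<omega> = js m \<and> S m \<omega> = ss m)}
        = q k (js n) j * measure M {\<omega>\<in>space M. \<forall>m\<le>n. J m \<omega> = js m \<and> S m \<omega> = ss m}"
begin

lemma S_mono: assumes "\<omega> \<in> space M" "m \<le> n" shows "S m \<omega> \<le> S n \<omega>"
  using assms(2) by (induction rule: dec_induct) (auto intro: order_trans less_imp_le S_inc assms(1))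

lemma S_sum: assumes "\<omega> \<in> space M" shows "n \<le> sum (S n \<omega>) UNIV"
proof (induction n)
  case (Suc n)
  have "sum (S n \<omega>) UNIV < sum (S (Suc n) \<omega>) UNIV"
  proof (rule sum_strict_mono_ex1)
    have lt: "S n \<omega> < S (Suc n) \<omega>" using S_inc assms by blast
    then show "\<forall>x\<in>UNIV. S n \<omega> x \<le> S (Suc n) \<omega> x" by (auto simp: le_fun_def less_fun_def)
    show "\<exists>a\<in>UNIV. S n \<omega> a < S (Suc n) \<omega> a"
    proof (rule ccontr)
      assume "\<not> ?thesis"
      then have "S (Suc n) \<omega> \<le> S n \<omega>" by (auto simp: le_fun_def not_less)
      then show False using lt by auto
    qed
  qed simp
  then show ?case using Suc by simp
qed simp

lemma le_bound: "\<omega> \<in> space M \<Longrightarrow> S n \<omega> \<le> k \<Longrightarrow> n \<le> sum k UNIV"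
  using S_sum[of \<omega> n] sum_mono[of UNIV "S n \<omega>" k] by (auto simp: le_fun_def)

lemma fin_le: "finite {l::'d\<Rightarrow>nat. l \<le> k}"
proof (rule finite_subset)
  show "{l::'d\<Rightarrow>nat. l \<le> k} \<subseteq> PiE UNIV (\<lambda>u. {..k u})" by (auto simp: le_fun_def PiE_def)
  show "finite (PiE UNIV (\<lambda>u. {..k u}))" by (rule finite_PiE) auto
qed

lemma Ncount_eq: assumes "\<omega> \<in> space M" "S n \<omega> \<le> k" "\<not> S (Suc n) \<omega> \<le> k"
  shows "Ncount S k \<omega> = n"
  unfolding Ncount_def
proof (rule cSup_eq_maximum)
  show "n \<in> {n. S n \<omega> \<le> k}" using assms by simp
  fix x assume "x \<in> {n. S n \<omega> \<le> k}"
  then have x: "S x \<omega> \<le> k" by simp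
  show "x \<le> n"
  proof (rule ccontr)
    assume "\<not> x \<le> n"
    then have "S (Suc n) \<omega> \<le> S x \<omega>" using S_mono assms(1) by simp
    then show False using x assms(3) by (meson order_trans)
  qed
qed

lemma Ncount_ex: assumes "\<omega> \<in> space M" shows "\<exists>n. S n \<omega> \<le> k \<and> \<not> S (Suc n) \<omega> \<le> k"
proof (rule ccontr)
  assume "\<not> ?thesis"
  then have step: "\<And>n. S n \<omega> \<le> k \<Longrightarrow> S (Suc n) \<omega> \<le> k" by blast
  have "S n \<omega> \<le> k" for n
  proof (induction n)
    case 0 show ?case by (simp add: S0[OF assms] le_fun_def)
  next
    case (Suc n) then show ?case using step by blast
  qed
  from le_bound[OF assms this[of "Suc (sum k UNIV)"]] show False by simp
qed

lemma Zsm0: assumes "\<omega> \<in> space M" shows "Zsm J S (\<lambda>_. 0) \<omega> = J 0 \<omega>"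
proof -
  have "\<not> S (Suc 0) \<omega> \<le> (\<lambda>_. 0)"
    using S_inc[OF assms, of 0] S0[OF assms] by (auto simp: less_fun_def le_fun_def)
  then have "Ncount S (\<lambda>_. 0) \<omega> = 0" using Ncount_eq[OF assms, of 0] S0[OF assms] by simp
  then show ?thesis by (simp add: Zsm_def)
qed

definition HS :: "nat \<Rightarrow> nat \<Rightarrow> nat \<Rightarrow> ('d \<Rightarrow> nat) \<Rightarrow> ((nat \<Rightarrow> nat) \<times> (nat \<Rightarrow> 'd \<Rightarrow> nat)) set" where
  "HS i n r l' = {h \<in> (PiE {..n} (\<lambda>_. {1..s})) \<times> (PiE {..n} (\<lambda>_. {x. x \<le> l'})).
      fst h n = r \<and> snd h n = l' \<and> fst h 0 = i}"

lemma HS_finite: "finite (HS i n r l')"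
proof (rule finite_subset)
  show "HS i n r l' \<subseteq> (PiE {..n} (\<lambda>_. {1..s})) \<times> (PiE {..n} (\<lambda>_. {x. x \<le> l'}))"
    by (auto simp: HS_def)
  show "finite ((PiE {..n} (\<lambda>_. {1..s})) \<times> (PiE {..n} (\<lambda>_. {x. x \<le> l'})))"
    by (intro finite_cartesian_product finite_PiE fin_le) auto
qed

lemma decomp:
  assumes [measurable]: "{\<omega>\<in>space M. P \<omega>} \<in> sets M"
  shows "measure M {\<omega>\<in>space M. J n \<omega> = r \<and> S n \<omega> = l' \<and> J 0 \<omega> = i \<and> P \<omega>}
    = (\<Sum>h\<in>HS i n r l'. measure M {\<omega>\<in>space M. P \<omega> \<and> (\<forall>m\<le>n. J m \<omega> = fst h m \<and> S m \<omega> = snd h m)})"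
proof -
  define A where "A = (\<lambda>h. {\<omega>\<in>space M. P \<omega> \<and> (\<forall>m\<le>n. J m \<omega> = fst h m \<and> S m \<omega> = snd h m)})"
  have eq: "{\<omega>\<in>space M. J n \<omega> = r \<and> S n \<omega> = l' \<and> J 0 \<omega> = i \<and> P \<omega>} = (\<Union>h\<in>HS i n r l'. A h)"
  proof (intro equalityI subsetI)
    fix \<omega> assume w: "\<omega> \<in> {\<omega>\<in>space M. J n \<omega> = r \<and> S n \<omega> = l' \<and> J 0 \<omega> = i \<and> P \<omega>}"
    let ?h = "(restrict (\<lambda>m. J m \<omega>) {..n}, restrict (\<lambda>m. S m \<omega>) {..n})"
    have "?h \<in> HS i n r l'" using w J_range S_mono by (auto simp: HS_def)
    moreover have "\<omega> \<in> A ?h" using w by (auto simp: A_def)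
    ultimately show "\<omega> \<in> (\<Union>h\<in>HS i n r l'. A h)" by blast
  next
    fix \<omega> assume "\<omega> \<in> (\<Union>h\<in>HS i n r l'. A h)"
    then obtain h where "h \<in> HS i n r l'" "\<omega> \<in> A h" by blast
    then show "\<omega> \<in> {\<omega>\<in>space M. J n \<omega> = r \<and> S n \<omega> = l' \<and> J 0 \<omega> = i \<and> P \<omega>}"
      by (auto simp: HS_def A_def)
  qed
  have "measure M (\<Union>h\<in>HS i n r l'. A h) = (\<Sum>h\<in>HS i n r l'. measure M (A h))"
  proof (rule finite_measure_finite_Union)
    show "finite (HS i n r l')" by (rule HS_finite)
    have "A h \<in> sets M" for h unfolding A_def by measurable
    then show "A ` HS i n r l' \<subseteq> sets M" by blast
    show "disjoint_family_on A (HS i n r l')"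
    proof (unfold disjoint_family_on_def, intro ballI impI)
      fix h1 h2 assume h: "h1 \<in> HS i n r l'" "h2 \<in> HS i n r l'" "h1 \<noteq> h2"
      show "A h1 \<inter> A h2 = {}"
      proof (rule ccontr)
        assume "A h1 \<inter> A h2 \<noteq> {}"
        then obtain \<omega> where "\<omega> \<in> A h1" "\<omega> \<in> A h2" by blast
        then have e: "\<And>m. m \<le> n \<Longrightarrow> fst h1 m = fst h2 m \<and> snd h1 m = snd h2 m"
          by (auto simp: A_def)
        have "fst h1 = fst h2" by (rule PiE_ext[of _ "{..n}" "\<lambda>_. {1..s}"]) (use h e in \<open>auto simp: HS_def\<close>)
        moreover have "snd h1 = snd h2" by (rule PiE_ext[of _ "{..n}" "\<lambda>_. {x. x \<le> l'}"]) (use h e in \<open>auto simp: HS_def\<close>)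
        ultimately show False using h(3) by (simp add: prod_eq_iff)
      qed
    qed
  qed
  then show ?thesis using eq by (simp add: A_def)
qed

lemma onestep:
  "measure M {\<omega>\<in>space M. J n \<omega> = r \<and> S n \<omega> = l' \<and> J 0 \<omega> = i \<and> (J (Suc n) \<omega> = j \<and> S (Suc n) \<omega> - S n \<omega> = d)}
   = q d r j * measure M {\<omega>\<in>space M. J n \<omega> = r \<and> S n \<omega> = l' \<and> J 0 \<omega> = i}"
proof -
  have "measure M {\<omega>\<in>space M. J n \<omega> = r \<and> S n \<omega> = l' \<and> J 0 \<omega> = i \<and> (J (Suc n) \<omega> = j \<and> S (Suc n) \<omega> - S n \<omega> = d)}
    = (\<Sum>h\<in>HS i n r l'. measure M {\<omega>\<in>space M. (J (Suc n) \<omega> = j \<and> S (Suc n) \<omega> - S n \<omega> = d) \<and> (\<forall>m\<le>n. J m \<omega> = fst h m \<and> S m \<omega> = snd h m)})"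
    by (rule decomp) measurable
  also have "\<dots> = (\<Sum>h\<in>HS i n r l'. q d r j * measure M {\<omega>\<in>space M. True \<and> (\<forall>m\<le>n. J m \<omega> = fst h m \<and> S m \<omega> = snd h m)})"
  proof (rule sum.cong)
    fix h assume "h \<in> HS i n r l'"
    then have "fst h n = r" by (simp add: HS_def)
    then show "measure M {\<omega>\<in>space M. (J (Suc n) \<omega> = j \<and> S (Suc n) \<omega> - S n \<omega> = d) \<and> (\<forall>m\<le>n. J m \<omega> = fst h m \<and> S m \<omega> = snd h m)}
      = q d r j * measure M {\<omega>\<in>space M. True \<and> (\<forall>m\<le>n. J m \<omega> = fst h m \<and> S m \<omega> = snd h m)}"
      using markov[of n j d "fst h" "snd h"] by (simp add: conj_assoc)
  qed simp
  also have "\<dots> = q d r j * measure M {\<omega>\<in>space M. J n \<omega> = r \<and> S n \<omega> = l' \<and> J 0 \<omega> = i \<and> True}"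
    by (subst decomp) (auto simp: sum_distrib_left)
  finally show ?thesis by simp
qed

lemma diffeq: fixes a b c :: "'d \<Rightarrow> nat"
  assumes "b \<le> a" "b \<le> c" "a - b = c - b" shows "a = c"
proof
  fix u
  have "a u - b u = c u - b u" using assms(3) by (metis fun_diff_def)
  moreover have "b u \<le> a u" "b u \<le> c u" using assms(1,2) by (auto simp: le_fun_def)
  ultimately show "a u = c u" by arith
qed

lemma pconv:
  "measure M {\<omega>\<in>space M. J n \<omega> = j \<and> S n \<omega> = l \<and> J 0 \<omega> = i}
   = convpow s q n l i j * measure M {\<omega>\<in>space M. J 0 \<omega> = i}"
proof (induction n arbitrary: l j)
  case 0
  show ?case
  proof (cases "l = (\<lambda>_. 0) \<and> i = j")
    case True
    then have "{\<omega>\<in>space M. J 0 \<omega> = j \<and> S 0 \<omega> = l \<and> J 0 \<omega> = i} = {\<omega>\<in>space M. J 0 \<omega> = i}"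
      using S0 by auto
    then show ?thesis using True by (simp add: idseq_def)
  next
    case False
    then have e: "{\<omega>\<in>space M. J 0 \<omega> = j \<and> S 0 \<omega> = l \<and> J 0 \<omega> = i} = {}"
      using S0 by auto
    show ?thesis unfolding e using False by (auto simp: idseq_def)
  qed
next
  case (Suc n)
  define B where "B = (\<lambda>x::('d\<Rightarrow>nat)\<times>nat. {\<omega>\<in>space M. J n \<omega> = snd x \<and> S n \<omega> = fst x \<and> J 0 \<omega> = i \<and>
      (J (Suc n) \<omega> = j \<and> S (Suc n) \<omega> - S n \<omega> = l - fst x)})"
  let ?X = "{l'. l' \<le> l} \<times> {1..s}"
  have eq: "{\<omega>\<in>space M. J (Suc n) \<omega> = j \<and> S (Suc n) \<omega> = l \<and> J 0 \<omega> = i} = (\<Union>x\<in>?X. B x)"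
  proof (intro equalityI subsetI)
    fix \<omega> assume w: "\<omega> \<in> {\<omega>\<in>space M. J (Suc n) \<omega> = j \<and> S (Suc n) \<omega> = l \<and> J 0 \<omega> = i}"
    then have "(S n \<omega>, J n \<omega>) \<in> ?X" using S_mono[of \<omega> n "Suc n"] J_range by auto
    moreover have "\<omega> \<in> B (S n \<omega>, J n \<omega>)" using w by (auto simp: B_def)
    ultimately show "\<omega> \<in> (\<Union>x\<in>?X. B x)" by blast
  next
    fix \<omega> assume "\<omega> \<in> (\<Union>x\<in>?X. B x)"
    then obtain x where x: "x \<in> ?X" "\<omega> \<in> B x" by blast
    then have w: "\<omega> \<in> space M" "S n \<omega> = fst x" "S (Suc n) \<omega> - S n \<omega> = l - fst x" by (auto simp: B_def)
    have "S (Suc n) \<omega> = l"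
      by (rule diffeq[of "S n \<omega>"]) (use w x S_mono[of \<omega> n "Suc n"] in auto)
    then show "\<omega> \<in> {\<omega>\<in>space M. J (Suc n) \<omega> = j \<and> S (Suc n) \<omega> = l \<and> J 0 \<omega> = i}"
      using x by (auto simp: B_def)
  qed
  have "measure M (\<Union>x\<in>?X. B x) = (\<Sum>x\<in>?X. measure M (B x))"
  proof (rule finite_measure_finite_Union)
    show "finite ?X" using fin_le by auto
    have "B x \<in> sets M" for x unfolding B_def by measurable
    then show "B ` ?X \<subseteq> sets M" by blast
    show "disjoint_family_on B ?X"
      by (auto simp: disjoint_family_on_def B_def prod_eq_iff)
  qed
  also have "\<dots> = (\<Sum>x\<in>?X. q (l - fst x) (snd x) j * (convpow s q n (fst x) i (snd x) * measure M {\<omega>\<in>space M. J 0 \<omega> = i}))"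
    by (rule sum.cong) (auto simp: B_def onestep Suc)
  also have "\<dots> = conv s (convpow s q n) q l i j * measure M {\<omega>\<in>space M. J 0 \<omega> = i}"
    unfolding conv_def sum.cartesian_product sum_distrib_right
    by (rule sum.cong) (auto simp: mult_ac)
  finally show ?case using eq by simp
qed

lemma Dmeas:
  assumes "l \<le> k"
  shows "measure M {\<omega>\<in>space M. J n \<omega> = j \<and> S n \<omega> = l \<and> J 0 \<omega> = i \<and> \<not> S (Suc n) \<omega> \<le> k}
    = convpow s q n l i j * measure M {\<omega>\<in>space M. J 0 \<omega> = i} * (1 - Hdist s q j (k - l))"
proof -
  define A where "A = {\<omega>\<in>space M. J n \<omega> = j \<and> S n \<omega> = l \<and> J 0 \<omega> = i}"
  define B' where "B' = {\<omega>\<in>space M. J n \<omega> = j \<and> S n \<omega> = l \<and> J 0 \<omega> = i \<and> S (Suc n) \<omega> \<le> k}"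
  define C where "C = (\<lambda>x::('d\<Rightarrow>nat)\<times>nat. {\<omega>\<in>space M. J n \<omega> = j \<and> S n \<omega> = l \<and> J 0 \<omega> = i \<and>
      (J (Suc n) \<omega> = snd x \<and> S (Suc n) \<omega> - S n \<omega> = fst x)})"
  let ?X = "{d. d \<le> k - l} \<times> {1..s}"
  have D: "{\<omega>\<in>space M. J n \<omega> = j \<and> S n \<omega> = l \<and> J 0 \<omega> = i \<and> \<not> S (Suc n) \<omega> \<le> k} = A - B'"
    by (auto simp: A_def B'_def)
  have [measurable]: "A \<in> sets M" "B' \<in> sets M" unfolding A_def B'_def by measurable
  have eq: "B' = (\<Union>x\<in>?X. C x)"
  proof (intro equalityI subsetI)
    fix \<omega> assume w: "\<omega> \<in> B'"
    then have "(S (Suc n) \<omega> - S n \<omega>, J (Suc n) \<omega>) \<in> ?X" using J_range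
      by (auto simp: B'_def le_fun_def fun_diff_def diff_le_mono)
    moreover have "\<omega> \<in> C (S (Suc n) \<omega> - S n \<omega>, J (Suc n) \<omega>)" using w by (auto simp: B'_def C_def)
    ultimately show "\<omega> \<in> (\<Union>x\<in>?X. C x)" by blast
  next
    fix \<omega> assume "\<omega> \<in> (\<Union>x\<in>?X. C x)"
    then obtain x where x: "x \<in> ?X" "\<omega> \<in> C x" by blast
    then have w: "\<omega> \<in> space M" "S n \<omega> = l" "S (Suc n) \<omega> - S n \<omega> \<le> k - l" by (auto simp: C_def)
    have m: "S n \<omega> \<le> S (Suc n) \<omega>" using S_mono[of \<omega> n "Suc n"] w by simp
    have "S (Suc n) \<omega> \<le> k"
      unfolding le_fun_def
    proof
      fix u
      have "S (Suc n) \<omega> u - l u \<le> k u - l u" "l u \<le> S (Suc n) \<omega> u" "l u \<le> k u"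
        using w m assms by (auto simp: le_fun_def fun_diff_def)
      then show "S (Suc n) \<omega> u \<le> k u" by arith
    qed
    then show "\<omega> \<in> B'" using x by (auto simp: B'_def C_def)
  qed
  have "measure M B' = (\<Sum>x\<in>?X. measure M (C x))"
    unfolding eq
  proof (rule finite_measure_finite_Union)
    show "finite ?X" using fin_le by auto
    have "C x \<in> sets M" for x unfolding C_def by measurable
    then show "C ` ?X \<subseteq> sets M" by blast
    show "disjoint_family_on C ?X"
      by (auto simp: disjoint_family_on_def C_def prod_eq_iff)
  qed
  also have "\<dots> = (\<Sum>x\<in>?X. q (fst x) j (snd x) * measure M A)"
    by (rule sum.cong) (auto simp: C_def A_def onestep)
  also have "\<dots> = measure M A * Hdist s q j (k - l)"
  proof -
    have "(\<Sum>x\<in>?X. q (fst x) j (snd x) * measure M A) = (\<Sum>d\<in>{d. d \<le> k - l}. \<Sum>j'\<in>{1..s}. q d j j' * measure M A)"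
      by (simp add: sum.cartesian_product case_prod_beta)
    also have "\<dots> = (\<Sum>j'\<in>{1..s}. \<Sum>d\<in>{d. d \<le> k - l}. q d j j' * measure M A)"
      by (rule sum.swap)
    also have "\<dots> = measure M A * Hdist s q j (k - l)"
      by (simp add: Hdist_def sum_distrib_left sum_distrib_right mult_ac)
    finally show ?thesis .
  qed
  finally have "measure M B' = measure M A * Hdist s q j (k - l)" .
  moreover have "B' \<subseteq> A" by (auto simp: A_def B'_def)
  ultimately have "measure M (A - B') = measure M A * (1 - Hdist s q j (k - l))"
    by (simp add: finite_measure_Diff algebra_simps)
  then show ?thesis using D pconv[of n j l i] by (simp add: A_def)
qed

lemma main:
  assumes j: "j \<in> {1..s}" and c: "measure M {\<omega>\<in>space M. J 0 \<omega> = i} > 0"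
  shows "measure M {\<omega>\<in>space M. Zsm J S k \<omega> = j \<and> J 0 \<omega> = i} / measure M {\<omega>\<in>space M. J 0 \<omega> = i}
     = conv s (useq s q) (Htilde s q) k i j"
proof -
  define c where "c = measure M {\<omega>\<in>space M. J 0 \<omega> = i}"
  define N where "N = sum k UNIV"
  define D where "D = (\<lambda>x::nat\<times>('d\<Rightarrow>nat). {\<omega>\<in>space M. J (fst x) \<omega> = j \<and> S (fst x) \<omega> = snd x \<and> J 0 \<omega> = i \<and> \<not> S (Suc (fst x)) \<omega> \<le> k})"
  let ?X = "{..N} \<times> {l. l \<le> k}"
  have eq: "{\<omega>\<in>space M. Zsm J S k \<omega> = j \<and> J 0 \<omega> = i} = (\<Union>x\<in>?X. D x)"
  proof (intro equalityI subsetI)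
    fix \<omega> assume w: "\<omega> \<in> {\<omega>\<in>space M. Zsm J S k \<omega> = j \<and> J 0 \<omega> = i}"
    then obtain n where n: "S n \<omega> \<le> k" "\<not> S (Suc n) \<omega> \<le> k" using Ncount_ex by blast
    then have "Ncount S k \<omega> = n" using Ncount_eq w by blast
    then have "\<omega> \<in> D (n, S n \<omega>)" using w n by (auto simp: D_def Zsm_def)
    moreover have "(n, S n \<omega>) \<in> ?X" using n le_bound w by (auto simp: N_def)
    ultimately show "\<omega> \<in> (\<Union>x\<in>?X. D x)" by blast
  next
    fix \<omega> assume "\<omega> \<in> (\<Union>x\<in>?X. D x)"
    then obtain x where x: "x \<in> ?X" "\<omega> \<in> D x" by blast
    then have "Ncount S k \<omega> = fst x" using Ncount_eq by (auto simp: D_def)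
    then show "\<omega> \<in> {\<omega>\<in>space M. Zsm J S k \<omega> = j \<and> J 0 \<omega> = i}"
      using x by (auto simp: D_def Zsm_def)
  qed
  have "measure M (\<Union>x\<in>?X. D x) = (\<Sum>x\<in>?X. measure M (D x))"
  proof (rule finite_measure_finite_Union)
    show "finite ?X" using fin_le by auto
    have "D x \<in> sets M" for x unfolding D_def by measurable
    then show "D ` ?X \<subseteq> sets M" by blast
    show "disjoint_family_on D ?X"
    proof (unfold disjoint_family_on_def, intro ballI impI)
      fix x y assume xy: "x \<in> ?X" "y \<in> ?X" "x \<noteq> y"
      show "D x \<inter> D y = {}"
      proof (rule ccontr)
        assume "D x \<inter> D y \<noteq> {}"
        then obtain \<omega> where w: "\<omega> \<in> D x" "\<omega> \<in> D y" by blast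
        then have "Ncount S k \<omega> = fst x" "Ncount S k \<omega> = fst y"
          using Ncount_eq xy(1,2) by (auto simp: D_def)
        then show False using w xy(3) by (auto simp: D_def prod_eq_iff)
      qed
    qed
  qed
  also have "\<dots> = (\<Sum>x\<in>?X. convpow s q (fst x) (snd x) i j * c * (1 - Hdist s q j (k - snd x)))"
    by (rule sum.cong) (auto simp: D_def Dmeas c_def)
  finally have E: "measure M {\<omega>\<in>space M. Zsm J S k \<omega> = j \<and> J 0 \<omega> = i}
     = (\<Sum>x\<in>?X. convpow s q (fst x) (snd x) i j * c * (1 - Hdist s q j (k - snd x)))"
    using eq by simp
  have u: "useq s q l i j = (\<Sum>n\<in>{..N}. convpow s q n l i j)" if l: "l \<le> k" for l
    unfolding useq_def
  proof (rule suminf_finite)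
    fix n assume "n \<notin> {..N}"
    then have e: "{\<omega>\<in>space M. J n \<omega> = j \<and> S n \<omega> = l \<and> J 0 \<omega> = i} = {}"
      using le_bound[of _ n k] l by (auto simp: N_def)
    have "convpow s q n l i j * c = 0" using pconv[of n j l i] unfolding e c_def by simp
    then show "convpow s q n l i j = 0" using c by (simp add: c_def)
  qed simp
  have R: "conv s (useq s q) (Htilde s q) k i j
      = (\<Sum>l\<in>{l. l \<le> k}. useq s q l i j * (1 - Hdist s q j (k - l)))"
    unfolding conv_def Htilde_def using j by (simp add: if_distrib cong: if_cong)
  also have "\<dots> = (\<Sum>l\<in>{l. l \<le> k}. \<Sum>n\<in>{..N}. convpow s q n l i j * (1 - Hdist s q j (k - l)))"
    by (rule sum.cong) (auto simp: u sum_distrib_right)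
  also have "\<dots> = (\<Sum>x\<in>?X. convpow s q (fst x) (snd x) i j * (1 - Hdist s q j (k - snd x)))"
    by (subst sum.swap) (simp add: sum.cartesian_product case_prod_beta)
  finally show ?thesis using E c unfolding c_def[symmetric]
    by (simp add: sum_divide_distrib)
qed

end

theorem proposition8:
  fixes M :: "'w measure" and s :: nat and q :: "('d::finite) mseq"
    and J :: "nat \<Rightarrow> 'w \<Rightarrow> nat" and S :: "nat \<Rightarrow> 'w \<Rightarrow> ('d \<Rightarrow> nat)"
    and i j :: nat and k :: "'d \<Rightarrow> nat"
  assumes "multi_time_MRC M s q J S"
    and "i \<in> {1..s}" and "j \<in> {1..s}"
    and "measure M {\<omega>\<in>space M. Zsm J S (\<lambda>_. 0) \<omega> = i} > 0"
  shows "smc_transition M J S k i j = conv s (useq s q) (Htilde s q) k i j"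
proof -
  have P: "prob_space M"
    and H1: "\<And>n. J n \<in> measurable M (count_space UNIV)"
    and H2: "\<And>n. S n \<in> measurable M (count_space UNIV)"
    and H3: "\<And>n \<omega>. \<omega> \<in> space M \<Longrightarrow> J n \<omega> \<in> {1..s}"
    and H4: "\<And>\<omega>. \<omega> \<in> space M \<Longrightarrow> S 0 \<omega> = (\<lambda>_. 0)"
    and H5: "\<And>n \<omega>. \<omega> \<in> space M \<Longrightarrow> S n \<omega> < S (Suc n) \<omega>"
    and H6: "\<And>n js ss j k.
        measure M {\<omega>\<in>space M. J (Suc n) \<omega> = j \<and> S (Suc n) \<omega> - S n \<omega> = k \<and>
                         (\<forall>m\<le>n. J m \<omega> = js m \<and> S m \<omega> = ss m)}
        = q k (js n) j * measure M {\<omega>\<in>space M. \<forall>m\<le>n. J m \<omega> = js m \<and> S m \<omega> = ss m}"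
    using assms(1) unfolding multi_time_MRC_def by blast+
  interpret mrc M s q J S
    by (rule mrc.intro[OF P], rule mrc_axioms.intro) (fact H1 H2 H3 H4 H5 H6)+
  have e1: "{\<omega>\<in>space M. Zsm J S (\<lambda>_. 0) \<omega> = i} = {\<omega>\<in>space M. J 0 \<omega> = i}"
    using Zsm0 by auto
  have e2: "{\<omega>\<in>space M. Zsm J S k \<omega> = j \<and> Zsm J S (\<lambda>_. 0) \<omega> = i} = {\<omega>\<in>space M. Zsm J S k \<omega> = j \<and> J 0 \<omega> = i}"
    using Zsm0 by auto
  have c: "measure M {\<omega>\<in>space M. J 0 \<omega> = i} > 0" using assms(4) e1 by simp
  show ?thesis
    unfolding smc_transition_def e1 e2
    by (rule main[OF assms(3) c])
qed
end
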